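(* Let $S$ be a set of pairwise disjoint line segments in the plane in general position, $H\subset S$, and $s_1,s_2\in S\setminus H$ distinct. There is an unbounded Voronoi edge in $\mathcal{V}_{|H|+1}(S)$ separating the regions $V_{|H|+1}(H\cup\{s_1\},S)$ and $V_{|H|+1}(H\cup\{s_2\},S)$ if and only if there exists a supporting halfplane of $s_1,s_2$ and $H$.
   Context: Distances are Euclidean: $d(x,s)=\min_{q\in s}d(x,q)$. For $|H'|=k$, $V_k(H',S)=\{x : d(x,s)<d(x,t)\ \forall s\in H',\ \forall t\in S\setminus H'\}$, and $\mathcal{V}_k(S)$ is the partition of the plane into these regions. A supporting halfplane of $s_1,s_2\notin H$ and $H$ is an open halfplane $h$ whose boundary line passes through at least one endpoint of $s_1$ and at least one endpoint of $s_2$, such that $h$ intersects all segments of $H$ and no segment of $S\setminus H$. General position: no more than three segments touch the same circle and no more than two endpoints are collinear. *)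

theory Defs
  imports "HOL-Analysis.Analysis"
begin

type_synonym point = "real^2"

definition is_segment :: "point set \<Rightarrow> bool" where
  "is_segment s \<longleftrightarrow> (\<exists>a b. a \<noteq> b \<and> s = closed_segment a b)"

definition endpoints :: "point set \<Rightarrow> point set" where
  "endpoints s = {p. \<exists>q. p \<noteq> q \<and> s = closed_segment p q}"

definition segdist :: "point \<Rightarrow> point set \<Rightarrow> real" where
  "segdist x s = infdist x s"

definition voronoi_region :: "point set set \<Rightarrow> point set set \<Rightarrow> point set" where
  "voronoi_region H' S = {x. \<forall>s\<in>H'. \<forall>t\<in>S - H'. segdist x s < segdist x t}"

text \<open>Points of the common boundary of two regions R1, R2 near which only
  these two regions occur; the Voronoi edges separating R1 and R2 are the
  connected components of this set.\<close>
definition edge_points :: "point set \<Rightarrow> point set \<Rightarrow> point set" where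
  "edge_points R1 R2 = {x. x \<in> closure R1 \<and> x \<in> closure R2 \<and>
      (\<exists>e>0. ball x e \<subseteq> closure R1 \<union> closure R2)}"

definition has_unbounded_edge :: "point set \<Rightarrow> point set \<Rightarrow> bool" where
  "has_unbounded_edge R1 R2 \<longleftrightarrow> (\<exists>C\<in>components (edge_points R1 R2). \<not> bounded C)"

definition pairwise_disjoint_segments :: "point set set \<Rightarrow> bool" where
  "pairwise_disjoint_segments S \<longleftrightarrow>
     (\<forall>s\<in>S. is_segment s) \<and> (\<forall>s\<in>S. \<forall>t\<in>S. s \<noteq> t \<longrightarrow> s \<inter> t = {})"

definition touches_circle :: "point set \<Rightarrow> point \<Rightarrow> real \<Rightarrow> bool" where
  "touches_circle s c r \<longleftrightarrow> s \<inter> sphere c r \<noteq> {} \<and> s \<inter> ball c r = {}"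

definition general_position :: "point set set \<Rightarrow> bool" where
  "general_position S \<longleftrightarrow>
     (\<forall>c r. r > 0 \<longrightarrow> card {s\<in>S. touches_circle s c r} \<le> 3) \<and>
     (\<forall>p\<in>\<Union>(endpoints ` S). \<forall>q\<in>\<Union>(endpoints ` S). \<forall>u\<in>\<Union>(endpoints ` S).
        p \<noteq> q \<and> p \<noteq> u \<and> q \<noteq> u \<longrightarrow> \<not> collinear {p, q, u})"

definition supporting_halfplane ::
  "point set set \<Rightarrow> point set set \<Rightarrow> point set \<Rightarrow> point set \<Rightarrow> point set \<Rightarrow> bool" where
  "supporting_halfplane S H s1 s2 h \<longleftrightarrow>
     (\<exists>a b. a \<noteq> 0 \<and> h = {x. a \<bullet> x > b} \<and>
        (\<exists>p\<in>endpoints s1. a \<bullet> p = b) \<and> (\<exists>q\<in>endpoints s2. a \<bullet> q = b)) \<and>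
     (\<forall>s\<in>H. h \<inter> s \<noteq> {}) \<and> (\<forall>t\<in>S - H. h \<inter> t = {})"

end

theory Submission
  imports Defs
begin


lemma collinear_line:
  fixes u x y z :: "real^2"
  assumes "u \<noteq> 0" "u \<bullet> x = c" "u \<bullet> y = c" "u \<bullet> z = c"
  shows "collinear {x,y,z}"
proof -
  have "aff_dim {x,y,z} \<le> aff_dim {x. u \<bullet> x = c}"
    by (rule aff_dim_subset) (use assms in auto)
  also have "\<dots> = 1" using assms(1) by simp
  finally show ?thesis by (simp add: collinear_aff_dim)
qed

lemma endpoints_intro:
  assumes "a \<noteq> b" shows "a \<in> endpoints (closed_segment a b)" "b \<in> endpoints (closed_segment a b)"
  unfolding endpoints_def
  using assms closed_segment_commute[of a b] by (blast, metis (mono_tags, lifting) mem_Collect_eq)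

lemma endpoints_in: "p \<in> endpoints s \<Longrightarrow> p \<in> s"
  unfolding endpoints_def by auto

lemma endpoints_other: assumes "p \<in> endpoints s"
  obtains q where "q \<in> endpoints s" "q \<noteq> p" "s = closed_segment p q"
proof -
  from assms obtain q where "p \<noteq> q" "s = closed_segment p q" unfolding endpoints_def by auto
  then show ?thesis using that endpoints_intro(2)[of p q] by auto
qed

lemma seg_inner_le:
  fixes v a b :: "real^2"
  assumes "q \<in> closed_segment a b"
  shows "v \<bullet> q \<le> max (v \<bullet> a) (v \<bullet> b)"
proof -
  obtain t where t: "0 \<le> t" "t \<le> 1" "q = (1 - t) *\<^sub>R a + t *\<^sub>R b"
    using assms by (auto simp: in_segment)
  have "v \<bullet> q = (1-t) * (v \<bullet> a) + t * (v \<bullet> b)" using t by (simp add: inner_add_right)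
  also have "\<dots> \<le> (1-t) * max (v \<bullet> a) (v \<bullet> b) + t * max (v \<bullet> a) (v \<bullet> b)"
    by (intro add_mono mult_left_mono) (use t in auto)
  finally show ?thesis by (simp add: algebra_simps)
qed

definition sig :: "point set \<Rightarrow> point \<Rightarrow> real" where
  "sig s v = Sup ((\<lambda>q. v \<bullet> q) ` s)"

lemma sig_seg: "sig (closed_segment a b) v = max (v \<bullet> a) (v \<bullet> b)"
  unfolding sig_def
  by (rule cSup_eq_maximum) (use seg_inner_le[of _ a b v] in \<open>auto simp: max_def\<close>)

lemma closure_vor:
  assumes "x \<in> closure (voronoi_region H' S)" "s \<in> H'" "t \<in> S - H'"
  shows "infdist x s \<le> infdist x t"
proof -
  have "closure (voronoi_region H' S) \<subseteq> {x. infdist x s \<le> infdist x t}"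
    apply (rule closure_minimal)
    using assms(2,3) apply (auto simp: voronoi_region_def segdist_def intro: less_imp_le)[1]
    by (intro closed_Collect_le continuous_intros)
  then show ?thesis using assms(1) by auto
qed



lemma dist_sq_diff:
  fixes y r q :: "'a::real_inner"
  shows "(dist y r)^2 - (dist y q)^2 = r \<bullet> r - q \<bullet> q - 2 * (y \<bullet> (r - q))"
  by (simp add: dist_norm power2_norm_eq_inner inner_diff_left inner_diff_right inner_commute algebra_simps)

lemma lin_aux: fixes X P Z D R Q BB :: real assumes "X \<le> 2*P" "Z \<le> -D" "0 \<le> R" "Q \<le> BB" "BB + 4*P < 2*D" shows "0 < R - Q - 2*(X+Z)"
  using assms by (smt (verit))

lemma eventually_closer:
  fixes a q0 m :: "real^2" and A :: "point set"
  assumes "bounded A" "\<forall>r\<in>A. a \<bullet> r \<le> cc" "a \<bullet> q0 > cc"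
  shows "eventually (\<lambda>t. \<forall>w. norm w < 2 \<longrightarrow> (\<forall>r\<in>A. dist (m + t *\<^sub>R a + w) q0 < dist (m + t *\<^sub>R a + w) r)) at_top"
proof -
  obtain M where M: "\<forall>r\<in>A. norm r \<le> M" using assms(1) bounded_iff by blast
  define B where "B = max M (norm q0)"
  define K where "K = norm m + 2"
  define \<delta> where "\<delta> = a \<bullet> q0 - cc"
  have dpos: "\<delta> > 0" using assms(3) by (simp add: \<delta>_def)
  have B0: "B \<ge> 0" "norm q0 \<le> B" by (auto simp: B_def le_max_iff_disj)
  have BA: "\<forall>r\<in>A. norm r \<le> B" using M by (auto simp: B_def)
  define T where "T = max 0 ((B*B + 4*K*B)/(2*\<delta>)) + 1"
  show ?thesis
    unfolding eventually_at_top_linorder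
  proof (intro exI[of _ T] allI impI ballI)
    fix t and w :: "real^2" and r assume t: "T \<le> t" and w: "norm w < 2" and r: "r \<in> A"
    define y where "y = m + t *\<^sub>R a + w"
    have t0: "t \<ge> 0" using t by (simp add: T_def)
    have tb: "2 * (\<delta> * t) > B*B + 4*(K*B)"
    proof -
      have "(B*B + 4*K*B)/(2*\<delta>) < t" using t by (simp add: T_def)
      then show ?thesis using dpos by (simp add: field_simps)
    qed
    have yid: "y \<bullet> (r - q0) = (m + w) \<bullet> (r - q0) + t * (a \<bullet> r - a \<bullet> q0)"
      by (simp add: y_def inner_add_left inner_diff_right algebra_simps)
    have nmw: "norm (m + w) \<le> K" using w norm_triangle_ineq[of m w] by (simp add: K_def)
    have nrq: "norm (r - q0) \<le> 2*B" using BA r B0 norm_triangle_ineq4[of r q0] by auto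
    have "(m + w) \<bullet> (r - q0) \<le> norm (m+w) * norm (r - q0)" by (rule norm_cauchy_schwarz)
    also have "\<dots> \<le> K * (2*B)" by (intro mult_mono nmw nrq) (auto simp: B0 K_def)
    finally have cc: "(m + w) \<bullet> (r - q0) \<le> 2*(K*B)" by simp
    have ar: "a \<bullet> r \<le> cc" using assms(2) r by auto
    have c2: "t * (a \<bullet> r - a \<bullet> q0) \<le> - (\<delta> * t)"
      using mult_left_mono[OF _ t0, of "a \<bullet> r - a \<bullet> q0" "-\<delta>"] ar by (simp add: \<delta>_def algebra_simps)
    have rr: "r \<bullet> r \<ge> 0" by simp
    have qq: "q0 \<bullet> q0 \<le> B*B"
      using B0 by (metis mult_mono norm_ge_zero power2_eq_square power2_norm_eq_inner)
    have "(dist y r)^2 - (dist y q0)^2 > 0"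
      unfolding dist_sq_diff yid by (rule lin_aux[OF cc c2 rr qq tb])
    then have "(dist y q0)^2 < (dist y r)^2" by simp
    then show "dist (m + t *\<^sub>R a + w) q0 < dist (m + t *\<^sub>R a + w) r"
      unfolding y_def[symmetric] by (rule power2_less_imp_less) simp
  qed
qed



lemma nearest_end:
  fixes y p p' :: "real^2"
  assumes "(y - p) \<bullet> (p' - p) \<le> 0"
  shows "infdist y (closed_segment p p') = dist y p"
proof (rule antisym)
  show "infdist y (closed_segment p p') \<le> dist y p" by (rule infdist_le) simp
  obtain r where r: "r \<in> closed_segment p p'" "infdist y (closed_segment p p') = dist y r"
    using infdist_attains_inf[of "closed_segment p p'" y] by auto
  obtain l where l: "0 \<le> l" "l \<le> 1" "r = (1 - l) *\<^sub>R p + l *\<^sub>R p'"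
    using r(1) by (auto simp: in_segment)
  have rr: "y - r = (y - p) - l *\<^sub>R (p' - p)" using l(3) by (simp add: algebra_simps)
  have "(dist y r)^2 = (dist y p)^2 - 2 * l * ((y - p) \<bullet> (p' - p)) + l^2 * ((p'-p) \<bullet> (p'-p))"
    unfolding dist_norm power2_norm_eq_inner rr
    by (simp add: inner_diff_left inner_diff_right inner_commute algebra_simps power2_eq_square)
  moreover have "l * ((y - p) \<bullet> (p' - p)) \<le> 0" using l(1) assms by (simp add: mult_nonneg_nonpos)
  moreover have "l^2 * ((p'-p) \<bullet> (p'-p)) \<ge> 0" by simp
  ultimately have "(dist y p)^2 \<le> (dist y r)^2" by linarith
  then have "dist y p \<le> dist y r" by (rule power2_le_imp_le) simp
  then show "dist y p \<le> infdist y (closed_segment p p')" using r by simp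
qed

lemma eventually_nearest:
  fixes a m p e :: "real^2"
  assumes "a \<bullet> e < 0"
  shows "eventually (\<lambda>t. \<forall>w. norm w < 2 \<longrightarrow> (m + t *\<^sub>R a + w - p) \<bullet> e \<le> 0) at_top"
proof -
  define K where "K = (norm (m - p) + 2) * norm e"
  have K0: "K \<ge> 0" by (simp add: K_def)
  define T where "T = max 0 (K / (- (a \<bullet> e))) + 1"
  show ?thesis unfolding eventually_at_top_linorder
  proof (intro exI[of _ T] allI impI)
    fix t and w :: "real^2" assume t: "T \<le> t" and w: "norm w < 2"
    have "(m - p + w) \<bullet> e \<le> norm (m - p + w) * norm e" by (rule norm_cauchy_schwarz)
    also have "\<dots> \<le> K" unfolding K_def
      by (intro mult_right_mono) (use w norm_triangle_ineq[of "m-p" w] in auto)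
    finally have 1: "(m - p + w) \<bullet> e \<le> K" .
    have "K / (- (a \<bullet> e)) < t" using t by (simp add: T_def)
    then have "K < t * (- (a \<bullet> e))" using assms by (simp add: field_simps)
    then have 2: "t * (a \<bullet> e) \<le> - K" by (simp add: algebra_simps)
    have "(m + t *\<^sub>R a + w - p) \<bullet> e = (m - p + w) \<bullet> e + t * (a \<bullet> e)"
      by (simp add: inner_add_left inner_diff_left algebra_simps)
    then show "(m + t *\<^sub>R a + w - p) \<bullet> e \<le> 0" using 1 2 by linarith
  qed
qed

definition G :: "point set set \<Rightarrow> point set set \<Rightarrow> point set \<Rightarrow> point set \<Rightarrow> point \<Rightarrow> point \<Rightarrow> point \<Rightarrow> bool" where
  "G S H s1 s2 p q y \<longleftrightarrow> infdist y s1 = dist y p \<and> infdist y s2 = dist y q \<and>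
     (\<forall>s\<in>H. infdist y s < dist y p \<and> infdist y s < dist y q) \<and>
     (\<forall>t\<in>S-H-{s1,s2}. dist y p < infdist y t \<and> dist y q < infdist y t)"

lemma G_sym: "G S H s1 s2 p q y \<longleftrightarrow> G S H s2 s1 q p y"
proof -
  have "{s1,s2} = {s2,s1}" by auto
  then show ?thesis unfolding G_def by metis
qed

lemma G_R1:
  assumes "G S H s1 s2 p q y" "dist y p < dist y q" "s1 \<notin> H" "s2 \<notin> H" "s1 \<in> S" "s2 \<in> S" "s1 \<noteq> s2"
  shows "y \<in> voronoi_region (insert s1 H) S"
  unfolding voronoi_region_def segdist_def
proof (intro CollectI ballI)
  fix s t assume s: "s \<in> insert s1 H" and t: "t \<in> S - insert s1 H"
  from assms(1) have g1: "infdist y s1 = dist y p" and g2: "infdist y s2 = dist y q"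
    and g3: "\<And>s. s\<in>H \<Longrightarrow> infdist y s < dist y p \<and> infdist y s < dist y q"
    and g4: "\<And>t. t\<in>S-H-{s1,s2} \<Longrightarrow> dist y p < infdist y t \<and> dist y q < infdist y t"
    unfolding G_def by blast+
  show "infdist y s < infdist y t"
  proof (cases "t = s2")
    case True
    show ?thesis
    proof (cases "s = s1")
      case True then show ?thesis using g1 g2 \<open>t = s2\<close> assms(2) by simp
    next
      case False then have "s \<in> H" using s by simp
      then show ?thesis using g3[of s] g2 \<open>t = s2\<close> by simp
    qed
  next
    case False
    then have t': "t \<in> S - H - {s1,s2}" using t by auto
    show ?thesis
    proof (cases "s = s1")
      case True then show ?thesis using g1 g4[OF t'] by simp
    next
      case False then have "s \<in> H" using s by simp
      then show ?thesis using g3[of s] g4[OF t'] by linarith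
    qed
  qed
qed

lemma approach_closure:
  fixes x y p q :: "real^2"
  assumes G: "\<forall>z\<in>ball x 2. G S H s1 s2 p q z"
    and y: "y \<in> ball x 1" and eq: "dist y p = dist y q" and pq: "p \<noteq> q"
    and "s1 \<notin> H" "s2 \<notin> H" "s1 \<in> S" "s2 \<in> S" "s1 \<noteq> s2"
  shows "y \<in> closure (voronoi_region (insert s1 H) S)"
  unfolding closure_approachable
proof (intro allI impI)
  fix e :: real assume e: "e > 0"
  define d where "d = p - q"
  have nd: "norm d > 0" using pq by (simp add: d_def)
  define \<epsilon> where "\<epsilon> = min e 1 / (2 * norm d)"
  have ep: "\<epsilon> > 0" using e nd by (simp add: \<epsilon>_def)
  define z where "z = y + \<epsilon> *\<^sub>R d"
  have dz: "dist z y = min e 1 / 2" using nd ep e by (simp add: z_def dist_norm \<epsilon>_def)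
  have "dist x z \<le> dist x y + dist y z" by (rule dist_triangle)
  then have "z \<in> ball x 2" using y dz by (simp add: dist_commute)
  then have Gz: "G S H s1 s2 p q z" using G by auto
  have "(dist z p)^2 - (dist z q)^2 = ((dist y p)^2 - (dist y q)^2) - 2 * \<epsilon> * (d \<bullet> d)"
    unfolding dist_sq_diff d_def[symmetric] z_def by (simp add: inner_add_left algebra_simps)
  moreover have "2 * \<epsilon> * (d \<bullet> d) > 0" using nd ep by simp
  moreover have "(dist y p)^2 - (dist y q)^2 = 0" using eq by simp
  ultimately have "(dist z p)^2 < (dist z q)^2" by linarith
  then have "dist z p < dist z q" by (rule power2_less_imp_less) simp
  then have "z \<in> voronoi_region (insert s1 H) S" using G_R1[OF Gz] assms(5-) by blast
  moreover have "dist z y < e" using dz e by linarith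
  ultimately show "\<exists>z\<in>voronoi_region (insert s1 H) S. dist z y < e" by blast
qed



lemma ray_unbounded:
  fixes m a :: "real^2"
  assumes "a \<noteq> 0"
  shows "\<not> bounded ((\<lambda>t. m + t *\<^sub>R a) ` {T0..})"
proof
  assume "bounded ((\<lambda>t. m + t *\<^sub>R a) ` {T0..})"
  then obtain B where B: "\<forall>x\<in>(\<lambda>t. m + t *\<^sub>R a) ` {T0..}. norm x \<le> B" unfolding bounded_iff by blast
  define t where "t = max T0 ((B + norm m + 1) / norm a)"
  have na: "norm a > 0" using assms by simp
  have "t \<ge> T0" by (simp add: t_def)
  then have 1: "norm (m + t *\<^sub>R a) \<le> B" using B by auto
  have t0: "t \<ge> (B + norm m + 1) / norm a" by (simp add: t_def)
  then have "t * norm a \<ge> B + norm m + 1" using na by (simp add: field_simps)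
  moreover have "t \<ge> 0"
  proof -
    have "B \<ge> 0" using 1 norm_ge_zero order_trans by blast
    then have "(B + norm m + 1) / norm a \<ge> 0" using na by simp
    then show ?thesis using t0 by linarith
  qed
  moreover have "norm (t *\<^sub>R a) \<le> norm (m + t *\<^sub>R a) + norm m"
    using norm_triangle_ineq4[of "m + t *\<^sub>R a" m] by simp
  ultimately show False using 1 by simp
qed

lemma backward:
  assumes fin: "finite S" and pds: "pairwise_disjoint_segments S" and gp: "general_position S"
    and HS: "H \<subseteq> S" and s1: "s1 \<in> S - H" and s2: "s2 \<in> S - H" and ne: "s1 \<noteq> s2"
    and sh: "supporting_halfplane S H s1 s2 h"
  shows "has_unbounded_edge (voronoi_region (insert s1 H) S) (voronoi_region (insert s2 H) S)"
proof -
  from sh obtain a b p q where a0: "a \<noteq> 0" and h: "h = {x. a \<bullet> x > b}"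
    and p: "p \<in> endpoints s1" "a \<bullet> p = b" and q: "q \<in> endpoints s2" "a \<bullet> q = b"
    and hH: "\<forall>s\<in>H. h \<inter> s \<noteq> {}" and hS: "\<forall>t\<in>S-H. h \<inter> t = {}"
    unfolding supporting_halfplane_def by blast
  have below: "a \<bullet> r \<le> b" if "t \<in> S - H" "r \<in> t" for t r
  proof -
    have "r \<notin> h" using hS that by blast
    then show ?thesis using h by (simp add: not_less)
  qed
  have disj: "s \<inter> t = {}" if "s\<in>S" "t\<in>S" "s\<noteq>t" for s t
    using pds that unfolding pairwise_disjoint_segments_def by blast
  have seg: "is_segment s" if "s\<in>S" for s using pds that unfolding pairwise_disjoint_segments_def by blast
  have nonline: False if "x\<in>\<Union>(endpoints`S)" "y\<in>\<Union>(endpoints`S)" "z\<in>\<Union>(endpoints`S)"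
     "x\<noteq>y" "x\<noteq>z" "y\<noteq>z" "a \<bullet> x = b" "a \<bullet> y = b" "a \<bullet> z = b" for x y z
  proof -
    have "collinear {x,y,z}" using collinear_line[OF a0] that(7-9) by blast
    then show False using gp that(1-6) unfolding general_position_def by blast
  qed
  have pS: "p \<in> \<Union>(endpoints`S)" using p s1 by blast
  have qS: "q \<in> \<Union>(endpoints`S)" using q s2 by blast
  have ps1: "p \<in> s1" using p endpoints_in by blast
  have qs2: "q \<in> s2" using q endpoints_in by blast
  have d12: "s1 \<inter> s2 = {}" using disj s1 s2 ne by blast
  have pq: "p \<noteq> q" using ps1 qs2 d12 by blast
  obtain p' where p': "p' \<in> endpoints s1" "p' \<noteq> p" "s1 = closed_segment p p'"
    using endpoints_other[OF p(1)] by blast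
  obtain q' where q': "q' \<in> endpoints s2" "q' \<noteq> q" "s2 = closed_segment q q'"
    using endpoints_other[OF q(1)] by blast
  have ap': "a \<bullet> p' < b"
  proof -
    have "a \<bullet> p' \<le> b" using below[OF s1] p'(3) by simp
    moreover have "p' \<noteq> q" using p'(3) qs2 d12 by auto
    moreover have "p' \<in> \<Union>(endpoints`S)" using p' s1 by blast
    ultimately show ?thesis using nonline[of p p' q] pS qS p'(2) pq p(2) q(2) by force
  qed
  have aq': "a \<bullet> q' < b"
  proof -
    have "a \<bullet> q' \<le> b" using below[OF s2] q'(3) by simp
    moreover have "q' \<noteq> p" using q'(3) ps1 d12 by auto
    moreover have "q' \<in> \<Union>(endpoints`S)" using q' s2 by blast
    ultimately show ?thesis using nonline[of q q' p] pS qS q'(2) pq p(2) q(2) by force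
  qed
  define Oth where "Oth = S - H - {s1,s2}"
  have other: "\<exists>c1<b. \<forall>r\<in>t. a \<bullet> r \<le> c1" if t: "t \<in> Oth" for t
  proof -
    have tS: "t \<in> S" "t \<notin> H" "t \<noteq> s1" "t \<noteq> s2" using t by (auto simp: Oth_def)
    obtain c d where cd: "c \<noteq> d" "t = closed_segment c d" using seg[OF tS(1)] unfolding is_segment_def by blast
    have ce: "c \<in> endpoints t" "d \<in> endpoints t" using endpoints_intro[OF cd(1)] cd(2) by auto
    have lt: "a \<bullet> e < b" if e: "e \<in> endpoints t" for e
    proof -
      have et: "e \<in> t" using e endpoints_in by blast
      have "a \<bullet> e \<le> b" using below[of t e] tS et by blast
      moreover have "e \<noteq> p" using et ps1 disj[of t s1] tS s1 by blast
      moreover have "e \<noteq> q" using et qs2 disj[of t s2] tS s2 by blast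
      moreover have "e \<in> \<Union>(endpoints`S)" using e tS by blast
      ultimately show ?thesis using nonline[of e p q] pS qS pq p(2) q(2) by force
    qed
    show ?thesis
      apply (rule exI[of _ "max (a \<bullet> c) (a \<bullet> d)"])
      using lt[OF ce(1)] lt[OF ce(2)] seg_inner_le[of _ c d a] cd(2) by auto
  qed
  obtain f where f: "\<forall>s\<in>H. f s \<in> s \<and> a \<bullet> f s > b"
  proof -
    have "\<forall>s\<in>H. \<exists>x. x \<in> s \<and> a \<bullet> x > b" using hH h by blast
    then show ?thesis using that by metis
  qed
  obtain cf where cf: "\<forall>t\<in>Oth. cf t < b \<and> (\<forall>r\<in>t. a \<bullet> r \<le> cf t)"
    using other by metis
  have finH: "finite H" using fin HS finite_subset by blast
  have finO: "finite Oth" using fin by (simp add: Oth_def)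
  define m where "m = (1/2) *\<^sub>R (p + q)"
  have ev1: "eventually (\<lambda>t. \<forall>w. norm w < 2 \<longrightarrow> (m + t *\<^sub>R a + w - p) \<bullet> (p' - p) \<le> 0) at_top"
    by (rule eventually_nearest) (use ap' p(2) in \<open>simp add: inner_diff_right\<close>)
  have ev2: "eventually (\<lambda>t. \<forall>w. norm w < 2 \<longrightarrow> (m + t *\<^sub>R a + w - q) \<bullet> (q' - q) \<le> 0) at_top"
    by (rule eventually_nearest) (use aq' q(2) in \<open>simp add: inner_diff_right\<close>)
  have ev3: "eventually (\<lambda>t. \<forall>s\<in>H. \<forall>w. norm w < 2 \<longrightarrow> (\<forall>r\<in>{p}. dist (m + t *\<^sub>R a + w) (f s) < dist (m + t *\<^sub>R a + w) r)) at_top"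
    by (rule eventually_ball_finite[OF finH]) (intro ballI eventually_closer[where cc=b], use f p(2) in auto)
  have ev4: "eventually (\<lambda>t. \<forall>s\<in>H. \<forall>w. norm w < 2 \<longrightarrow> (\<forall>r\<in>{q}. dist (m + t *\<^sub>R a + w) (f s) < dist (m + t *\<^sub>R a + w) r)) at_top"
    by (rule eventually_ball_finite[OF finH]) (intro ballI eventually_closer[where cc=b], use f q(2) in auto)
  have bO: "bounded u" if "u \<in> Oth" for u
    using seg[of u] that unfolding Oth_def is_segment_def by (auto simp: bounded_closed_segment)
  have ev5: "eventually (\<lambda>t. \<forall>u\<in>Oth. \<forall>w. norm w < 2 \<longrightarrow> (\<forall>r\<in>u. dist (m + t *\<^sub>R a + w) p < dist (m + t *\<^sub>R a + w) r)) at_top"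
    by (rule eventually_ball_finite[OF finO]) (intro ballI, rule eventually_closer[where cc="cf _"], use cf p(2) bO in auto)
  have ev6: "eventually (\<lambda>t. \<forall>u\<in>Oth. \<forall>w. norm w < 2 \<longrightarrow> (\<forall>r\<in>u. dist (m + t *\<^sub>R a + w) q < dist (m + t *\<^sub>R a + w) r)) at_top"
    by (rule eventually_ball_finite[OF finO]) (intro ballI, rule eventually_closer[where cc="cf _"], use cf q(2) bO in auto)
  obtain T0 where T0': "\<forall>t\<ge>T0. 
      (\<forall>w. norm w < 2 \<longrightarrow> (m + t *\<^sub>R a + w - p) \<bullet> (p' - p) \<le> 0) \<and>
      (\<forall>w. norm w < 2 \<longrightarrow> (m + t *\<^sub>R a + w - q) \<bullet> (q' - q) \<le> 0) \<and>
      (\<forall>s\<in>H. \<forall>w. norm w < 2 \<longrightarrow> (\<forall>r\<in>{p}. dist (m + t *\<^sub>R a + w) (f s) < dist (m + t *\<^sub>R a + w) r)) \<and>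
      (\<forall>s\<in>H. \<forall>w. norm w < 2 \<longrightarrow> (\<forall>r\<in>{q}. dist (m + t *\<^sub>R a + w) (f s) < dist (m + t *\<^sub>R a + w) r)) \<and>
      (\<forall>u\<in>Oth. \<forall>w. norm w < 2 \<longrightarrow> (\<forall>r\<in>u. dist (m + t *\<^sub>R a + w) p < dist (m + t *\<^sub>R a + w) r)) \<and>
      (\<forall>u\<in>Oth. \<forall>w. norm w < 2 \<longrightarrow> (\<forall>r\<in>u. dist (m + t *\<^sub>R a + w) q < dist (m + t *\<^sub>R a + w) r))"
    using eventually_conj[OF ev1 eventually_conj[OF ev2 eventually_conj[OF ev3 eventually_conj[OF ev4 eventually_conj[OF ev5 ev6]]]]]
    unfolding eventually_at_top_linorder by (elim exE) (rule that)
  note T0 = T0'[rule_format]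
  have Gball: "G S H s1 s2 p q z" if t: "t \<ge> T0" and z: "z \<in> ball (m + t *\<^sub>R a) 2" for t z
  proof -
    define w where "w = z - (m + t *\<^sub>R a)"
    have w: "norm w < 2" using z by (simp add: w_def dist_norm norm_minus_commute)
    have zw: "z = m + t *\<^sub>R a + w" by (simp add: w_def)
    note T = T0[OF t]
    note T1 = conjunct1[OF T, rule_format, OF w]
    note T2 = conjunct1[OF conjunct2[OF T], rule_format, OF w]
    note T3 = conjunct1[OF conjunct2[OF conjunct2[OF T]], rule_format]
    note T4 = conjunct1[OF conjunct2[OF conjunct2[OF conjunct2[OF T]]], rule_format]
    note T5 = conjunct1[OF conjunct2[OF conjunct2[OF conjunct2[OF conjunct2[OF T]]]], rule_format]
    note T6 = conjunct2[OF conjunct2[OF conjunct2[OF conjunct2[OF conjunct2[OF T]]]], rule_format]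
    have g1: "infdist z s1 = dist z p"
      unfolding p'(3) zw by (rule nearest_end[OF T1])
    have g2: "infdist z s2 = dist z q"
      unfolding q'(3) zw by (rule nearest_end[OF T2])
    have g3: "infdist z s < dist z p \<and> infdist z s < dist z q" if s: "s \<in> H" for s
    proof -
      have "infdist z s \<le> dist z (f s)" using f s infdist_le by blast
      moreover have "dist z (f s) < dist z p" using T3[OF s w, of p] unfolding zw by simp
      moreover have "dist z (f s) < dist z q" using T4[OF s w, of q] unfolding zw by simp
      ultimately show ?thesis by linarith
    qed
    have g4: "dist z p < infdist z u \<and> dist z q < infdist z u" if u: "u \<in> Oth" for u
    proof -
      obtain c d where cd: "u = closed_segment c d"
        using seg[of u] u unfolding Oth_def is_segment_def by blast
      obtain r where r: "r \<in> u" "infdist z u = dist z r"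
        using infdist_attains_inf[of u z] cd by auto
      show ?thesis using T5[OF u w r(1)] T6[OF u w r(1)] r(2) unfolding zw by simp
    qed
    show ?thesis unfolding G_def using g1 g2 g3 g4 by (auto simp: Oth_def)
  qed
  define R1 where "R1 = voronoi_region (insert s1 H) S"
  define R2 where "R2 = voronoi_region (insert s2 H) S"
  have s1n: "s1 \<notin> H" "s1 \<in> S" and s2n: "s2 \<notin> H" "s2 \<in> S" using s1 s2 by auto
  have onE: "m + t *\<^sub>R a \<in> edge_points R1 R2" if t: "t \<ge> T0" for t
  proof -
    define x where "x = m + t *\<^sub>R a"
    have G1: "\<forall>z\<in>ball x 2. G S H s1 s2 p q z" using Gball[OF t] by (simp add: x_def)
    have G2: "\<forall>z\<in>ball x 2. G S H s2 s1 q p z" using G1 G_sym by blast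
    have cl1: "y \<in> closure R1" if "y \<in> ball x 1" "dist y p = dist y q" for y
      unfolding R1_def by (rule approach_closure[OF G1 that pq s1n(1) s2n(1) s1n(2) s2n(2) ne])
    have cl2: "y \<in> closure R2" if "y \<in> ball x 1" "dist y p = dist y q" for y
      unfolding R2_def by (rule approach_closure[OF G2 that(1) that(2)[symmetric] pq[symmetric] s2n(1) s1n(1) s2n(2) s1n(2) ne[symmetric]])
    have xeq: "dist x p = dist x q"
    proof -
      have "x \<bullet> (p - q) = m \<bullet> (p - q)" using p(2) q(2) by (simp add: x_def inner_add_left inner_diff_right)
      also have "\<dots> = (p \<bullet> p - q \<bullet> q) / 2" by (simp add: m_def inner_add_left inner_add_right inner_diff_left inner_diff_right inner_commute)
      finally have "(dist x p)^2 - (dist x q)^2 = 0" unfolding dist_sq_diff by simp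
      then have "(dist x p)^2 = (dist x q)^2" by simp
      then show ?thesis by (simp add: power2_eq_iff_nonneg)
    qed
    have xb: "x \<in> ball x 1" by simp
    have "ball x 1 \<subseteq> closure R1 \<union> closure R2"
    proof
      fix y assume y: "y \<in> ball x 1"
      then have yb: "y \<in> ball x 2" by simp
      consider "dist y p < dist y q" | "dist y p > dist y q" | "dist y p = dist y q" by linarith
      then show "y \<in> closure R1 \<union> closure R2"
      proof cases
        case 1 then have "y \<in> R1" unfolding R1_def using G_R1[of S H s1 s2 p q y] G1 yb s1n s2n ne by blast
        then show ?thesis using closure_subset by blast
      next
        case 2 then have "y \<in> R2" unfolding R2_def using G_R1[of S H s2 s1 q p y] G2 yb s1n s2n ne by auto
        then show ?thesis using closure_subset by blast
      next
        case 3 then show ?thesis using cl1 y by blast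
      qed
    qed
    then show ?thesis unfolding edge_points_def x_def[symmetric]
      using cl1[OF xb xeq] cl2[OF xb xeq] by (intro CollectI conjI exI[of _ 1]) auto
  qed
  define Ray where "Ray = (\<lambda>t. m + t *\<^sub>R a) ` {T0..}"
  have RE: "Ray \<subseteq> edge_points R1 R2" using onE by (auto simp: Ray_def)
  have Rc: "connected Ray" unfolding Ray_def
    by (intro connected_continuous_image continuous_intros) simp
  have x0: "m + T0 *\<^sub>R a \<in> Ray" unfolding Ray_def by (rule imageI) simp
  define C where "C = connected_component_set (edge_points R1 R2) (m + T0 *\<^sub>R a)"
  have Cc: "C \<in> components (edge_points R1 R2)" unfolding C_def using RE x0 by (intro componentsI) blast
  have "Ray \<subseteq> C" unfolding C_def by (rule connected_component_maximal[OF x0 Rc RE])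
  then have "\<not> bounded C" using ray_unbounded[OF a0, of m T0] bounded_subset unfolding Ray_def by blast
  then show ?thesis unfolding has_unbounded_edge_def R1_def[symmetric] R2_def[symmetric] using Cc by blast
qed


lemma asym_lower:
  fixes x r :: "real^2"
  assumes "x \<noteq> 0"
  shows "norm x - (x /\<^sub>R norm x) \<bullet> r \<le> dist x r"
proof -
  have "(x /\<^sub>R norm x) \<bullet> (x - r) \<le> norm (x /\<^sub>R norm x) * norm (x - r)" by (rule norm_cauchy_schwarz)
  also have "\<dots> = dist x r" using assms by (simp add: dist_norm)
  finally have 1: "(x /\<^sub>R norm x) \<bullet> (x - r) \<le> dist x r" .
  have "(x /\<^sub>R norm x) \<bullet> x = norm x" using assms
    by (simp add: power2_norm_eq_inner[symmetric] power2_eq_square)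
  then show ?thesis using 1 by (simp add: inner_diff_right)
qed

lemma asym_upper:
  fixes x e :: "real^2" and n :: nat
  assumes M: "norm e \<le> M" and x: "norm x \<ge> M + real n + 1"
  shows "dist x e \<le> norm x - (x /\<^sub>R norm x) \<bullet> e + M^2 * inverse (real (Suc n))"
proof -
  have M0: "M \<ge> 0" using M norm_ge_zero order_trans by blast
  have x0: "x \<noteq> 0" using x M0 by auto
  define v where "v = x /\<^sub>R norm x"
  define R where "R = norm x"
  have nv: "norm v = 1" using x0 by (simp add: v_def)
  have ve: "v \<bullet> e \<le> M" using norm_cauchy_schwarz[of v e] nv M by simp
  have ve2: "- (v \<bullet> e) \<le> M" using norm_cauchy_schwarz[of v "-e"] nv M by simp
  define A where "A = R - v \<bullet> e"
  have An: "A \<ge> real n + 1" using x ve by (simp add: A_def R_def)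
  have Apos: "A > 0" using An by linarith
  have xv: "x = R *\<^sub>R v" using x0 by (simp add: v_def R_def)
  have vv: "v \<bullet> v = 1" using nv by (metis norm_eq_1)
  have "(dist x e)^2 = (R *\<^sub>R v - e) \<bullet> (R *\<^sub>R v - e)"
    by (simp add: dist_norm power2_norm_eq_inner xv[symmetric])
  also have "\<dots> = R^2 * (v \<bullet> v) - 2 * R * (v \<bullet> e) + e \<bullet> e"
    by (simp add: inner_diff_left inner_diff_right inner_commute power2_eq_square algebra_simps)
  also have "\<dots> = R^2 - 2 * R * (v \<bullet> e) + e \<bullet> e" using vv by simp
  also have "\<dots> = A^2 + (e \<bullet> e - (v \<bullet> e)^2)" by (simp add: A_def power2_eq_square algebra_simps)
  also have "\<dots> \<le> A^2 + M^2"
  proof -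
    have "e \<bullet> e \<le> M^2" using M norm_ge_zero power_mono power2_norm_eq_inner by metis
    then show ?thesis by (smt (verit) zero_le_power2)
  qed
  also have "\<dots> \<le> (A + M^2 / A)^2"
  proof -
    have "(A + M^2 / A)^2 = A^2 + 2 * M^2 + (M^2/A)^2" using Apos by (simp add: power2_eq_square field_simps)
    then show ?thesis by (smt (verit) zero_le_power2)
  qed
  finally have "dist x e \<le> A + M^2 / A"
    by (rule power2_le_imp_le) (use Apos in simp)
  also have "M^2 / A \<le> M^2 * inverse (real (Suc n))"
  proof -
    have "M^2 / A = M^2 * inverse A" by (simp add: field_simps)
    also have "\<dots> \<le> M^2 * inverse (real (Suc n))"
      by (rule mult_left_mono) (use An in \<open>auto intro!: le_imp_inverse_le\<close>)
    finally show ?thesis .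
  qed
  finally show ?thesis by (simp add: A_def R_def v_def)
qed

lemma sig_bound: "is_segment s \<Longrightarrow> r \<in> s \<Longrightarrow> v \<bullet> r \<le> sig s v"
  unfolding is_segment_def using seg_inner_le sig_seg by metis

lemma sig_attain: assumes "is_segment s" shows "\<exists>e\<in>endpoints s. v \<bullet> e = sig s v"
proof -
  obtain a b where ab: "a \<noteq> b" "s = closed_segment a b" using assms unfolding is_segment_def by blast
  show ?thesis using endpoints_intro[OF ab(1)] ab(2) sig_seg[of a b v]
    by (cases "v \<bullet> a \<le> v \<bullet> b") (auto simp: max_def)
qed

lemma limit_le:
  fixes y :: "nat \<Rightarrow> real^2"
  assumes y: "\<forall>n. norm (y n) \<ge> M + real n + 1" and lim: "(\<lambda>n. y n /\<^sub>R norm (y n)) \<longlonglongrightarrow> u"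
    and d: "\<forall>n. infdist (y n) s \<le> infdist (y n) t"
    and s: "is_segment s" and e: "e \<in> t" "norm e \<le> M"
  shows "u \<bullet> e \<le> sig s u"
proof -
  obtain a b where ab: "a \<noteq> b" "s = closed_segment a b" using s unfolding is_segment_def by blast
  have M0: "M \<ge> 0" using e norm_ge_zero order_trans by blast
  have step: "(y n /\<^sub>R norm (y n)) \<bullet> e \<le> max ((y n /\<^sub>R norm (y n)) \<bullet> a) ((y n /\<^sub>R norm (y n)) \<bullet> b) + M^2 * inverse (real (Suc n))" for n
  proof -
    have y0: "y n \<noteq> 0" using y[rule_format, of n] M0 by auto
    obtain r where r: "r \<in> s" "infdist (y n) s = dist (y n) r"
      using infdist_attains_inf[of s "y n"] ab by auto
    have "norm (y n) - max ((y n /\<^sub>R norm (y n)) \<bullet> a) ((y n /\<^sub>R norm (y n)) \<bullet> b)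
          \<le> norm (y n) - (y n /\<^sub>R norm (y n)) \<bullet> r"
    proof -
      have "(y n /\<^sub>R norm (y n)) \<bullet> r \<le> max ((y n /\<^sub>R norm (y n)) \<bullet> a) ((y n /\<^sub>R norm (y n)) \<bullet> b)"
        by (rule seg_inner_le) (use r ab in simp)
      then show ?thesis by linarith
    qed
    also have "\<dots> \<le> infdist (y n) s" using asym_lower[OF y0] r(2) by simp
    also have "\<dots> \<le> infdist (y n) t" using d by simp
    also have "\<dots> \<le> dist (y n) e" using infdist_le[OF e(1)] .
    also have "\<dots> \<le> norm (y n) - (y n /\<^sub>R norm (y n)) \<bullet> e + M^2 * inverse (real (Suc n))"
      by (rule asym_upper[OF e(2)]) (use y in simp)
    finally show ?thesis by simp
  qed
  have l1: "(\<lambda>n. (y n /\<^sub>R norm (y n)) \<bullet> e) \<longlonglongrightarrow> u \<bullet> e"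
    by (intro tendsto_intros lim)
  have l2: "(\<lambda>n. max ((y n /\<^sub>R norm (y n)) \<bullet> a) ((y n /\<^sub>R norm (y n)) \<bullet> b) + M^2 * inverse (real (Suc n)))
      \<longlonglongrightarrow> max (u \<bullet> a) (u \<bullet> b) + M^2 * 0"
    by (intro tendsto_intros lim LIMSEQ_inverse_real_of_nat)
  have "u \<bullet> e \<le> max (u \<bullet> a) (u \<bullet> b) + M^2 * 0"
    by (rule LIMSEQ_le[OF l1 l2]) (use step in blast)
  then show ?thesis using ab(2) sig_seg by simp
qed

lemma limit_sig_le:
  fixes y :: "nat \<Rightarrow> real^2"
  assumes y: "\<forall>n. norm (y n) \<ge> M + real n + 1" and lim: "(\<lambda>n. y n /\<^sub>R norm (y n)) \<longlonglongrightarrow> u"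
    and d: "\<forall>n. infdist (y n) s \<le> infdist (y n) t"
    and s: "is_segment s" and t: "is_segment t" and tM: "\<forall>e\<in>t. norm e \<le> M"
  shows "sig t u \<le> sig s u"
proof -
  obtain c d where cd: "c \<noteq> d" "t = closed_segment c d" using t unfolding is_segment_def by blast
  have "u \<bullet> c \<le> sig s u" "u \<bullet> d \<le> sig s u"
    using limit_le[OF y lim d s, of c] limit_le[OF y lim d s, of d] cd tM by auto
  then show ?thesis using cd sig_seg by simp
qed



lemma forward:
  assumes fin: "finite S" and pds: "pairwise_disjoint_segments S" and gp: "general_position S"
    and HS: "H \<subseteq> S" and s1: "s1 \<in> S - H" and s2: "s2 \<in> S - H" and ne: "s1 \<noteq> s2"
    and ue: "has_unbounded_edge (voronoi_region (insert s1 H) S) (voronoi_region (insert s2 H) S)"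
  shows "\<exists>h. supporting_halfplane S H s1 s2 h"
proof -
  define R1 where "R1 = voronoi_region (insert s1 H) S"
  define R2 where "R2 = voronoi_region (insert s2 H) S"
  obtain C where C: "C \<in> components (edge_points R1 R2)" "\<not> bounded C"
    using ue unfolding has_unbounded_edge_def R1_def R2_def by blast
  have CE: "x \<in> closure R1 \<and> x \<in> closure R2" if "x \<in> C" for x
    using in_components_subset[OF C(1)] that unfolding edge_points_def by blast
  have disj: "s \<inter> t = {}" if "s\<in>S" "t\<in>S" "s\<noteq>t" for s t
    using pds that unfolding pairwise_disjoint_segments_def by blast
  have seg: "is_segment s" if "s\<in>S" for s using pds that unfolding pairwise_disjoint_segments_def by blast
  have "\<forall>s\<in>S. bounded s" using seg unfolding is_segment_def by (metis bounded_closed_segment)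
  then have "bounded (\<Union>S)" by (rule bounded_Union[OF fin])
  then obtain M where M: "\<forall>x\<in>\<Union>S. norm x \<le> M" unfolding bounded_iff by blast
  have "\<forall>n::nat. \<exists>x\<in>C. norm x > M + real n + 1"
    using C(2) unfolding bounded_iff by (meson not_le)
  then obtain x where x: "\<forall>n. x n \<in> C \<and> norm (x n) > M + real n + 1" by metis
  have M0: "M \<ge> 0" using M s1 seg[of s1] unfolding is_segment_def
    by (metis DiffD1 UnionI ends_in_segment(1) norm_ge_zero order_trans)
  have xnz: "x n \<noteq> 0" for n using x M0 by (metis norm_zero not_less of_nat_0_le_iff add_nonneg_nonneg zero_le_one)
  define v where "v n = x n /\<^sub>R norm (x n)" for n
  have vs: "v n \<in> sphere 0 1" for n using xnz by (simp add: v_def)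
  obtain u r where u: "u \<in> sphere 0 1" "strict_mono r" "(v \<circ> r) \<longlonglongrightarrow> u"
    using compact_imp_seq_compact[OF compact_sphere[of "0::real^2" 1]] vs unfolding seq_compact_def by metis
  define y where "y n = x (r n)" for n
  have yb: "\<forall>n. norm (y n) \<ge> M + real n + 1"
  proof
    fix n
    have "real n \<le> real (r n)" using seq_suble[OF u(2)] by simp
    then show "norm (y n) \<ge> M + real n + 1" using x unfolding y_def by (smt (verit))
  qed
  have ylim: "(\<lambda>n. y n /\<^sub>R norm (y n)) \<longlonglongrightarrow> u" using u(3) by (simp add: y_def v_def comp_def)
  have yC: "y n \<in> C" for n using x by (simp add: y_def)
  have SM: "\<forall>e\<in>t. norm e \<le> M" if "t \<in> S" for t using M that by blast
  have s1n: "s1 \<in> S" "s1 \<notin> H" and s2n: "s2 \<in> S" "s2 \<notin> H" using s1 s2 by auto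
  have le: "sig t u \<le> sig s u" if "s \<in> S" "t \<in> S" "\<forall>n. infdist (y n) s \<le> infdist (y n) t" for s t
    by (rule limit_sig_le[OF yb ylim that(3) seg[OF that(1)] seg[OF that(2)] SM[OF that(2)]])
  have i1: "sig s2 u \<le> sig s1 u"
    by (rule le[OF s1n(1) s2n(1)]) (use CE yC closure_vor[of _ "insert s1 H" S s1 s2] s1n s2n ne in \<open>auto simp: R1_def\<close>)
  have i2: "sig s1 u \<le> sig s2 u"
    by (rule le[OF s2n(1) s1n(1)]) (use CE yC closure_vor[of _ "insert s2 H" S s2 s1] s1n s2n ne in \<open>auto simp: R2_def\<close>)
  define \<beta> where "\<beta> = sig s1 u"
  have i3: "\<beta> \<le> sig s u" if s: "s \<in> H" for s
    unfolding \<beta>_def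
    by (rule le) (use CE yC closure_vor[of _ "insert s2 H" S s s1] s1n s2n ne s HS in \<open>auto simp: R2_def\<close>)
  have i4: "sig t u \<le> \<beta>" if t: "t \<in> S - H - {s1,s2}" for t
    unfolding \<beta>_def
    by (rule le) (use CE yC closure_vor[of _ "insert s1 H" S s1 t] s1n s2n ne t in \<open>auto simp: R1_def\<close>)
  have u0: "u \<noteq> 0" using u(1) by auto
  obtain p where p: "p \<in> endpoints s1" "u \<bullet> p = \<beta>" using sig_attain[OF seg[OF s1n(1)]] \<beta>_def by metis
  obtain q where q: "q \<in> endpoints s2" "u \<bullet> q = \<beta>" proof -
    have "sig s2 u = \<beta>" using i1 i2 \<beta>_def by simp
    then show ?thesis using sig_attain[OF seg[OF s2n(1)], of u] that by metis
  qed
  have ps1: "p \<in> s1" using p endpoints_in by blast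
  have qs2: "q \<in> s2" using q endpoints_in by blast
  have pq: "p \<noteq> q" using ps1 qs2 disj[OF s1n(1) s2n(1) ne] by blast
  have strictH: "\<exists>e\<in>s. u \<bullet> e > \<beta>" if s: "s \<in> H" for s
  proof -
    have sS: "s \<in> S" using s HS by blast
    obtain e where e: "e \<in> endpoints s" "u \<bullet> e = sig s u" using sig_attain[OF seg[OF sS]] by metis
    have es: "e \<in> s" using e endpoints_in by blast
    have "sig s u \<noteq> \<beta>"
    proof
      assume eq: "sig s u = \<beta>"
      have "collinear {e, p, q}" using collinear_line[OF u0, of e \<beta> p q] e(2) eq p(2) q(2) by simp
      moreover have "e \<noteq> p" using es ps1 disj[OF sS s1n(1)] s s1n by blast
      moreover have "e \<noteq> q" using es qs2 disj[OF sS s2n(1)] s s2n by blast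
      ultimately show False using gp pq e(1) p(1) q(1) sS s1n s2n unfolding general_position_def by blast
    qed
    then have "u \<bullet> e > \<beta>" using i3[OF s] e(2) by simp
    then show ?thesis using es by blast
  qed
  have belowS: "u \<bullet> r \<le> \<beta>" if t: "t \<in> S - H" and r: "r \<in> t" for t r
  proof -
    have tS: "t \<in> S" using t by blast
    have "u \<bullet> r \<le> sig t u" by (rule sig_bound[OF seg[OF tS] r])
    moreover have "sig t u \<le> \<beta>"
      using i1 i2 i4[of t] t by (cases "t = s1 \<or> t = s2") (auto simp: \<beta>_def)
    ultimately show ?thesis by simp
  qed
  show ?thesis
    unfolding supporting_halfplane_def
  proof (intro exI conjI)
    show "{x. \<beta> < u \<bullet> x} = {x. \<beta> < u \<bullet> x}" ..
    show "u \<noteq> 0" by (rule u0)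
    show "\<exists>p\<in>endpoints s1. u \<bullet> p = \<beta>" using p by blast
    show "\<exists>q\<in>endpoints s2. u \<bullet> q = \<beta>" using q by blast
    show "\<forall>s\<in>H. {x. \<beta> < u \<bullet> x} \<inter> s \<noteq> {}" using strictH by blast
    show "\<forall>t\<in>S - H. {x. \<beta> < u \<bullet> x} \<inter> t = {}" using belowS by fastforce
  qed
qed


theorem corollary1:
  fixes S H :: "(real^2) set set" and s1 s2 :: "(real^2) set"
  assumes "finite S"
    and "pairwise_disjoint_segments S"
    and "general_position S"
    and "H \<subseteq> S"
    and "s1 \<in> S - H" and "s2 \<in> S - H" and "s1 \<noteq> s2"
  shows "has_unbounded_edge (voronoi_region (insert s1 H) S) (voronoi_region (insert s2 H) S)
     \<longleftrightarrow> (\<exists>h. supporting_halfplane S H s1 s2 h)"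
  using forward[OF assms] backward[OF assms] by blast

end
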